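(* Let $f\in C^1[0,1]$ with $f(0)=0$, $h:=f'$, $q$ satisfying (q), and $c^*$ as below. Let $c_2>c_1\ge c^*$, and let $z_1$, $z_2$ be solutions of $(P_{c_1})$ and $(P_{c_2})$ respectively. If $z_1(1)\le z_2(1)$, then $z_1(\varphi)<z_2(\varphi)$ for all $\varphi\in(0,1)$.
   Context: Condition (q): $q\in C[0,1]$, $q>0$ on $(0,1)$, $q(0)=q(1)=0$, and $\limsup_{\varphi\to0^+}q(\varphi)/\varphi<+\infty$. For $c\in\mathbb R$, a solution of problem $(P_c)$ is a function $z\in C[0,1]\cap C^1(0,1)$ with $\dot z(\varphi)=h(\varphi)-c-q(\varphi)/z(\varphi)$ and $z(\varphi)<0$ for all $\varphi\in(0,1)$, and $z(0)=0$. A solution of $(P^{00}_c)$ is a solution of $(P_c)$ which also satisfies $z(1)=0$. $c^*$ denotes the real number such that $(P^{00}_c)$ has a solution iff $c\ge c^*$ (that solution being unique). *)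

theory Defs
  imports "HOL-Analysis.Analysis"
begin

definition cond_q :: "(real \<Rightarrow> real) \<Rightarrow> bool" where
  "cond_q q \<longleftrightarrow> continuous_on {0..1} q \<and> (\<forall>\<phi>\<in>{0<..<1}. q \<phi> > 0) \<and> q 0 = 0 \<and> q 1 = 0 \<and>
     Limsup (at_right 0) (\<lambda>\<phi>. ereal (q \<phi> / \<phi>)) < \<infinity>"

definition sol_P :: "(real \<Rightarrow> real) \<Rightarrow> (real \<Rightarrow> real) \<Rightarrow> real \<Rightarrow> (real \<Rightarrow> real) \<Rightarrow> bool" where
  "sol_P h q c z \<longleftrightarrow> continuous_on {0..1} z \<and>
     (\<forall>\<phi>\<in>{0<..<1}. z differentiable (at \<phi>)) \<and> continuous_on {0<..<1} (deriv z) \<and>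
     (\<forall>\<phi>\<in>{0<..<1}. deriv z \<phi> = h \<phi> - c - q \<phi> / z \<phi> \<and> z \<phi> < 0) \<and> z 0 = 0"

definition sol_P00 :: "(real \<Rightarrow> real) \<Rightarrow> (real \<Rightarrow> real) \<Rightarrow> real \<Rightarrow> (real \<Rightarrow> real) \<Rightarrow> bool" where
  "sol_P00 h q c z \<longleftrightarrow> sol_P h q c z \<and> z 1 = 0"

end

theory Submission
  imports Defs
begin

theorem corollary5p2:
  fixes f h q z1 z2 :: "real \<Rightarrow> real" and cstar c1 c2 :: real
  assumes f_deriv: "\<forall>x\<in>{0..1}. (f has_real_derivative h x) (at x within {0..1})"
    and h_cont: "continuous_on {0..1} h"
    and f0: "f 0 = 0"
    and q: "cond_q q"
    and cstar: "\<forall>c. (\<exists>z. sol_P00 h q c z) \<longleftrightarrow> c \<ge> cstar"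
    and cstar_uniq: "\<forall>c z w. sol_P00 h q c z \<longrightarrow> sol_P00 h q c w \<longrightarrow> (\<forall>\<phi>\<in>{0..1}. z \<phi> = w \<phi>)"
    and c12: "c2 > c1" "c1 \<ge> cstar"
    and z1: "sol_P h q c1 z1" and z2: "sol_P h q c2 z2"
    and z12: "z1 1 \<le> z2 1"
  shows "\<forall>\<phi>\<in>{0<..<1}. z1 \<phi> < z2 \<phi>"
proof (rule ccontr)
  define w where "w = (\<lambda>x. z2 x - z1 x)"
  have qpos: "\<And>x. x \<in> {0<..<1} \<Longrightarrow> q x > 0" using q unfolding cond_q_def by blast
  have wcont: "continuous_on {0..1} w"
    using z1 z2 unfolding sol_P_def w_def by (auto intro: continuous_intros)
  have wder: "(w has_real_derivative (deriv z2 x - deriv z1 x)) (at x)" if "x \<in> {0<..<1}" for x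
  proof -
    have "(z1 has_real_derivative deriv z1 x) (at x)" "(z2 has_real_derivative deriv z2 x) (at x)"
      using z1 z2 that unfolding sol_P_def
      by (meson DERIV_deriv_iff_real_differentiable)+
    then show ?thesis unfolding w_def by (auto intro: derivative_intros)
  qed
  have wneg: "deriv z2 x - deriv z1 x \<le> -(c2 - c1)" if x: "x \<in> {0<..<1}" "w x \<le> 0" for x
  proof -
    have e1: "deriv z1 x = h x - c1 - q x / z1 x" and n1: "z1 x < 0"
      and e2: "deriv z2 x = h x - c2 - q x / z2 x" and n2: "z2 x < 0"
      using z1 z2 x(1) unfolding sol_P_def by auto
    have "deriv z2 x - deriv z1 x = -(c2 - c1) + q x * (z2 x - z1 x) / (z1 x * z2 x)"
      using n1 n2 by (simp add: e1 e2 field_simps)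
    moreover have "q x * (z2 x - z1 x) / (z1 x * z2 x) \<le> 0"
      using qpos[OF x(1)] x(2) n1 n2 unfolding w_def
      by (intro divide_nonpos_pos mult_nonneg_nonpos) (auto intro: mult_neg_neg)
    ultimately show ?thesis by linarith
  qed
  assume "\<not> (\<forall>\<phi>\<in>{0<..<1}. z1 \<phi> < z2 \<phi>)"
  then obtain p where p: "p \<in> {0<..<1}" "w p \<le> 0" unfolding w_def by force
  have wle: "w t \<le> 0" if t: "p \<le> t" "t < 1" for t
  proof (rule ccontr)
    assume wt: "\<not> w t \<le> 0"
    define S where "S = {p..t} \<inter> w -` {..0}"
    have "continuous_on {p..t} w" using continuous_on_subset[OF wcont, of "{p..t}"] p t by auto
    then have cS: "closed S" unfolding S_def
      by (intro continuous_closed_preimage) auto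
    have pS: "p \<in> S" using p t unfolding S_def by auto
    have bS: "bdd_above S" unfolding S_def by (auto intro: bdd_above_Int1)
    define s where "s = Sup S"
    have sS: "s \<in> S" unfolding s_def using closed_contains_Sup[OF _ bS cS] pS by blast
    have sle: "\<And>x. x \<in> S \<Longrightarrow> x \<le> s" unfolding s_def using bS by (simp add: cSup_upper)
    have ws: "w s \<le> 0" and s1: "p \<le> s" "s \<le> t" using sS unfolding S_def by auto
    have st: "s < t" using ws wt s1 by (cases "s = t") auto
    have sI: "s \<in> {0<..<1}" using s1 st p t by auto
    have "deriv z2 s - deriv z1 s < 0" using wneg[OF sI ws] c12 by linarith
    from DERIV_neg_dec_right[OF wder[OF sI] this] obtain d where d: "d > 0"
      "\<And>e. e > 0 \<Longrightarrow> e < d \<Longrightarrow> w (s + e) < w s" by blast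
    define e where "e = min (d/2) ((t - s)/2)"
    have e0: "e \<le> (t - s)/2" "e \<le> d/2" unfolding e_def using min.cobounded1 min.cobounded2 by blast+
    have "e > 0" using d st unfolding e_def by simp
    moreover have "e < d" using e0(2) d by (simp add: field_simps)
    moreover have "s + e \<le> t" using e0(1) st by (simp add: field_simps)
    ultimately have e: "e > 0" "e < d" "s + e \<le> t" by auto
    have "w (s + e) \<le> 0" using d(2)[OF e(1,2)] ws by linarith
    moreover have "s + e \<in> {p..t}" using e s1 by simp
    ultimately have "s + e \<in> S" unfolding S_def by simp
    from sle[OF this] e(1) show False by linarith
  qed
  have pl: "p < 1" using p by simp
  have cp: "continuous_on {p..1} w" using continuous_on_subset[OF wcont, of "{p..1}"] p by simp
  have dp: "w differentiable (at y)" if "p < y" "y < 1" for y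
    using wder[of y] that p real_differentiable_def by auto
  obtain l x where lx: "p < x" "x < 1" "(w has_real_derivative l) (at x)" "w 1 - w p = (1 - p) * l"
    using MVT[OF pl cp dp] by blast
  have xI: "x \<in> {0<..<1}" using lx p by auto
  have "l = deriv z2 x - deriv z1 x" using DERIV_unique[OF lx(3) wder[OF xI]] .
  moreover have "w x \<le> 0" using wle[of x] lx by simp
  ultimately have "l < 0" using wneg[OF xI] c12 by force
  moreover have "(1 - p) * l < 0" using \<open>l < 0\<close> pl by (simp add: mult_pos_neg)
  ultimately have "w 1 < w p" using lx(4) by linarith
  then show False using p z12 unfolding w_def by auto
qed

end
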